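(* Let $\gamma\in(0,1)$, $\mathcal{S}=\{s_0,s_1\}$, $\mathcal{A}=\{a_0,a_1\}$, $d_0=(1/2,1/2)$, and $\mathcal{R}(s,a)=\mathbb{1}\{s=s_0,a=a_0\}+\mathbb{1}\{s=s_1,a=a_1\}$. Let $\hat\Pi=\{\pi_0,\pi_1,\pi_2\}$ where $\pi_0$ plays $a_0$ at both states, $\pi_1$ plays $a_0$ at $s_0$ and $a_1$ at $s_1$, and $\pi_2$ plays $a_1$ at $s_0$ and $a_0$ at $s_1$ (deterministically). Then: (i) for every transition model $\mathcal{T}$, the discounted visit counts $\mathcal{F}^{\pi_0}_{\mathcal{T}},\mathcal{F}^{\pi_1}_{\mathcal{T}},\mathcal{F}^{\pi_2}_{\mathcal{T}}$ are not collinear; (ii) for every transition model $\mathcal{T}$, $\frac{1}{1-\gamma}=J_{\mathcal{T}}(\pi_1)>J_{\mathcal{T}}(\pi_0)>J_{\mathcal{T}}(\pi_2)=0$. Consequently every pair of transition models is equivalent on $\hat\Pi$, so there is no pair of transition models that is non-trivial, non-equivalent and unexploitable on $\hat\Pi$ for this task.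
   Context: Discounted visit counts: $\mathcal{F}^\pi_{\mathcal{T}}(s,a)=\mathbb{E}\big[\sum_{t\ge0}\gamma^t\mathbb{1}(s_t=s,a_t=a)\big]$ with $s_0\sim d_0$, $a_t\sim\pi(\cdot\mid s_t)$, $s_{t+1}\sim\mathcal{T}(\cdot\mid s_t,a_t)$; value $J_{\mathcal{T}}(\pi)=\langle\mathcal{R},\mathcal{F}^\pi_{\mathcal{T}}\rangle$. Collinear means all the vectors lie on a single line in $\mathbb{R}^{|\mathcal{S}||\mathcal{A}|}$. $J$ is trivial on $\Pi$ if constant on $\Pi$; $J_1,J_2$ are equivalent on $\Pi$ if for all $\pi,\pi'\in\Pi$, $J_1(\pi)\ge J_1(\pi')\iff J_2(\pi)\ge J_2(\pi')$. $(\mathcal{T},\mathcal{T}')$ is exploitable relative to $\Pi$ if there are $\pi,\pi'\in\Pi$ with $J_{\mathcal{T}}(\pi)>J_{\mathcal{T}}(\pi')$ and $J_{\mathcal{T}'}(\pi')>J_{\mathcal{T}'}(\pi)$; otherwise unexploitable. A pair of transition models is called non-trivial/non-equivalent on $\Pi$ if both induced value functions are non-trivial on $\Pi$ / they are not equivalent on $\Pi$. *)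

theory Defs
  imports "HOL-Analysis.Analysis"
begin

datatype st = S0 | S1
datatype act = A0 | A1

lemma UNIV_st: "(UNIV :: st set) = {S0, S1}"
  using st.exhaust by auto

lemma UNIV_act: "(UNIV :: act set) = {A0, A1}"
  using act.exhaust by auto

instance st :: finite
  by standard (simp add: UNIV_st)

instance act :: finite
  by standard (simp add: UNIV_act)

definition valid_transition :: "(st \<Rightarrow> act \<Rightarrow> st \<Rightarrow> real) \<Rightarrow> bool" where
  "valid_transition T \<longleftrightarrow> (\<forall>s a s'. 0 \<le> T s a s') \<and> (\<forall>s a. (\<Sum>s'\<in>UNIV. T s a s') = 1)"

definition det_policy :: "(st \<Rightarrow> act) \<Rightarrow> st \<Rightarrow> act \<Rightarrow> real" where
  "det_policy f = (\<lambda>s a. if a = f s then 1 else 0)"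

primrec state_dist :: "(st \<Rightarrow> real) \<Rightarrow> (st \<Rightarrow> act \<Rightarrow> st \<Rightarrow> real) \<Rightarrow> (st \<Rightarrow> act \<Rightarrow> real)
    \<Rightarrow> nat \<Rightarrow> st \<Rightarrow> real" where
  "state_dist d0 T pol 0 = d0"
| "state_dist d0 T pol (Suc t) =
     (\<lambda>s'. \<Sum>s\<in>UNIV. \<Sum>a\<in>UNIV. state_dist d0 T pol t s * pol s a * T s a s')"

definition visit_counts :: "real \<Rightarrow> (st \<Rightarrow> real) \<Rightarrow> (st \<Rightarrow> act \<Rightarrow> st \<Rightarrow> real)
    \<Rightarrow> (st \<Rightarrow> act \<Rightarrow> real) \<Rightarrow> st \<times> act \<Rightarrow> real" where
  "visit_counts \<gamma> d0 T pol = (\<lambda>(s, a). \<Sum>t. \<gamma> ^ t * (state_dist d0 T pol t s * pol s a))"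

definition visit_vec :: "real \<Rightarrow> (st \<Rightarrow> real) \<Rightarrow> (st \<Rightarrow> act \<Rightarrow> st \<Rightarrow> real)
    \<Rightarrow> (st \<Rightarrow> act \<Rightarrow> real) \<Rightarrow> real ^ (st \<times> act)" where
  "visit_vec \<gamma> d0 T pol = (\<chi> p. visit_counts \<gamma> d0 T pol p)"

definition value_fn :: "real \<Rightarrow> (st \<Rightarrow> real) \<Rightarrow> (st \<times> act \<Rightarrow> real)
    \<Rightarrow> (st \<Rightarrow> act \<Rightarrow> st \<Rightarrow> real) \<Rightarrow> (st \<Rightarrow> act \<Rightarrow> real) \<Rightarrow> real" where
  "value_fn \<gamma> d0 R T pol = (\<Sum>p\<in>UNIV. R p * visit_counts \<gamma> d0 T pol p)"

definition trivial_on :: "'p set \<Rightarrow> ('p \<Rightarrow> real) \<Rightarrow> bool" where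
  "trivial_on P J \<longleftrightarrow> (\<forall>pol\<in>P. \<forall>pol'\<in>P. J pol = J pol')"

definition equivalent_on :: "'p set \<Rightarrow> ('p \<Rightarrow> real) \<Rightarrow> ('p \<Rightarrow> real) \<Rightarrow> bool" where
  "equivalent_on P J1 J2 \<longleftrightarrow> (\<forall>pol\<in>P. \<forall>pol'\<in>P. J1 pol \<ge> J1 pol' \<longleftrightarrow> J2 pol \<ge> J2 pol')"

definition exploitable_on :: "'p set \<Rightarrow> ('p \<Rightarrow> real) \<Rightarrow> ('p \<Rightarrow> real) \<Rightarrow> bool" where
  "exploitable_on P J1 J2 \<longleftrightarrow> (\<exists>pol\<in>P. \<exists>pol'\<in>P. J1 pol > J1 pol' \<and> J2 pol' > J2 pol)"

definition d0_ex :: "st \<Rightarrow> real" where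
  "d0_ex = (\<lambda>s. 1/2)"

definition R_ex :: "st \<times> act \<Rightarrow> real" where
  "R_ex = (\<lambda>(s, a). (if s = S0 \<and> a = A0 then 1 else 0) + (if s = S1 \<and> a = A1 then 1 else 0))"

definition pi0 :: "st \<Rightarrow> act \<Rightarrow> real" where
  "pi0 = det_policy (\<lambda>s. A0)"

definition pi1 :: "st \<Rightarrow> act \<Rightarrow> real" where
  "pi1 = det_policy (\<lambda>s. if s = S0 then A0 else A1)"

definition pi2 :: "st \<Rightarrow> act \<Rightarrow> real" where
  "pi2 = det_policy (\<lambda>s. if s = S0 then A1 else A0)"

definition Pi_hat :: "(st \<Rightarrow> act \<Rightarrow> real) set" where
  "Pi_hat = {pi0, pi1, pi2}"

end

theory Submission
  imports Defs
begin

lemma sum_st: "(\<Sum>s\<in>UNIV. g s) = g S0 + g S1"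
  by (simp add: UNIV_st)

lemma sum_act: "(\<Sum>a\<in>UNIV. g a) = g A0 + g A1"
  by (simp add: UNIV_act)

lemma UNIV_pair: "(UNIV :: (st \<times> act) set) = {(S0,A0),(S0,A1),(S1,A0),(S1,A1)}"
  apply (rule set_eqI) apply (case_tac x) apply (case_tac a; case_tac b) by auto

lemma sum_pair: "(\<Sum>p\<in>UNIV. g p) = g (S0,A0) + g (S0,A1) + g (S1,A0) + g (S1,A1)"
  by (simp add: UNIV_pair add.assoc)

lemma det_sum: "(\<Sum>a\<in>UNIV. X * det_policy f s a * Y a) = X * Y (f s)"
  by (cases "f s") (auto simp: sum_act det_policy_def)

lemma sd_props:
  assumes "valid_transition T"
  shows "(\<forall>s. 0 \<le> state_dist d0_ex T (det_policy f) t s) \<and>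
         state_dist d0_ex T (det_policy f) t S0 + state_dist d0_ex T (det_policy f) t S1 = 1"
proof (induction t)
  case 0
  then show ?case by (simp add: d0_ex_def)
next
  case (Suc t)
  let ?D = "state_dist d0_ex T (det_policy f) t"
  have T0: "\<And>s a s'. 0 \<le> T s a s'" and T1: "\<And>s a. T s a S0 + T s a S1 = 1"
    using assms by (auto simp: valid_transition_def sum_st)
  have e: "\<And>s'. state_dist d0_ex T (det_policy f) (Suc t) s' = ?D S0 * T S0 (f S0) s' + ?D S1 * T S1 (f S1) s'"
    using det_sum[of "?D S0" f S0 "\<lambda>a. T S0 a _"] det_sum[of "?D S1" f S1 "\<lambda>a. T S1 a _"]
    by (simp add: sum_st)
  have "\<forall>s. 0 \<le> state_dist d0_ex T (det_policy f) (Suc t) s"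
    using Suc T0 unfolding e by (metis add_nonneg_nonneg mult_nonneg_nonneg)
  moreover have "?D S0 * T S0 (f S0) S0 + ?D S1 * T S1 (f S1) S0 + (?D S0 * T S0 (f S0) S1 + ?D S1 * T S1 (f S1) S1) = 1"
  proof -
    have "?D S0 * T S0 (f S0) S0 + ?D S1 * T S1 (f S1) S0 + (?D S0 * T S0 (f S0) S1 + ?D S1 * T S1 (f S1) S1)
       = ?D S0 * (T S0 (f S0) S0 + T S0 (f S0) S1) + ?D S1 * (T S1 (f S1) S0 + T S1 (f S1) S1)"
      by (simp add: algebra_simps)
    also have "\<dots> = 1" using T1 Suc by simp
    finally show ?thesis .
  qed
  ultimately show ?case unfolding e by simp
qed

lemma series_props:
  assumes "valid_transition T" "0 < \<gamma>" "\<gamma> < 1"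
  shows "summable (\<lambda>t. \<gamma>^t * state_dist d0_ex T (det_policy f) t s)"
    "0 < (\<Sum>t. \<gamma>^t * state_dist d0_ex T (det_policy f) t s)"
    "(\<Sum>t. \<gamma>^t * state_dist d0_ex T (det_policy f) t S0) + (\<Sum>t. \<gamma>^t * state_dist d0_ex T (det_policy f) t S1) = 1 / (1 - \<gamma>)"
proof -
  let ?D = "state_dist d0_ex T (det_policy f)"
  have nn: "\<And>t s. 0 \<le> ?D t s" and one: "\<And>t. ?D t S0 + ?D t S1 = 1"
    using sd_props[OF assms(1)] by auto
  have le1: "\<And>t s. ?D t s \<le> 1"
    by (metis (full_types) add_increasing2 le_add_same_cancel1 nn one st.exhaust add.commute)
  have sm: "summable (\<lambda>t. \<gamma>^t * ?D t s)" for s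
  proof (rule summable_comparison_test[where g="\<lambda>t. \<gamma>^t"])
    show "\<exists>N. \<forall>n\<ge>N. norm (\<gamma> ^ n * ?D n s) \<le> \<gamma> ^ n"
      using nn le1 assms(2) by (auto intro!: exI[of _ 0] mult_left_le simp: abs_mult)
    show "summable (\<lambda>t. \<gamma>^t)" using assms by simp
  qed
  then show "summable (\<lambda>t. \<gamma>^t * ?D t s)" .
  show "0 < (\<Sum>t. \<gamma>^t * ?D t s)"
    by (rule suminf_pos2[where i=0, OF sm], rule mult_nonneg_nonneg, use assms(2) in simp, rule nn) (simp add: d0_ex_def)
  have "(\<Sum>t. \<gamma>^t * ?D t S0) + (\<Sum>t. \<gamma>^t * ?D t S1) = (\<Sum>t. \<gamma>^t * ?D t S0 + \<gamma>^t * ?D t S1)"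
    by (rule suminf_add[OF sm sm])
  also have "\<dots> = (\<Sum>t. \<gamma>^t)"
    by (simp add: distrib_left[symmetric] one)
  also have "\<dots> = 1 / (1 - \<gamma>)" using assms by (simp add: suminf_geometric)
  finally show "(\<Sum>t. \<gamma>^t * ?D t S0) + (\<Sum>t. \<gamma>^t * ?D t S1) = 1 / (1 - \<gamma>)" .
qed

lemma vc_det: "visit_counts \<gamma> d0 T (det_policy f) (s, a) =
   (if a = f s then (\<Sum>t. \<gamma>^t * state_dist d0 T (det_policy f) t s) else 0)"
  by (simp add: visit_counts_def det_policy_def)

theorem mainTheorem5:
  fixes \<gamma> :: real
  assumes "0 < \<gamma>" and "\<gamma> < 1"
  shows "(\<forall>T. valid_transition T \<longrightarrow>
            \<not> collinear {visit_vec \<gamma> d0_ex T pi0, visit_vec \<gamma> d0_ex T pi1, visit_vec \<gamma> d0_ex T pi2})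
       \<and> (\<forall>T. valid_transition T \<longrightarrow>
            1 / (1 - \<gamma>) = value_fn \<gamma> d0_ex R_ex T pi1
            \<and> value_fn \<gamma> d0_ex R_ex T pi1 > value_fn \<gamma> d0_ex R_ex T pi0
            \<and> value_fn \<gamma> d0_ex R_ex T pi0 > value_fn \<gamma> d0_ex R_ex T pi2
            \<and> value_fn \<gamma> d0_ex R_ex T pi2 = 0)
       \<and> (\<forall>T T'. valid_transition T \<longrightarrow> valid_transition T' \<longrightarrow>
            equivalent_on Pi_hat (value_fn \<gamma> d0_ex R_ex T) (value_fn \<gamma> d0_ex R_ex T'))
       \<and> \<not> (\<exists>T T'. valid_transition T \<and> valid_transition T'
            \<and> \<not> trivial_on Pi_hat (value_fn \<gamma> d0_ex R_ex T)
            \<and> \<not> trivial_on Pi_hat (value_fn \<gamma> d0_ex R_ex T')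
            \<and> \<not> equivalent_on Pi_hat (value_fn \<gamma> d0_ex R_ex T) (value_fn \<gamma> d0_ex R_ex T')
            \<and> \<not> exploitable_on Pi_hat (value_fn \<gamma> d0_ex R_ex T) (value_fn \<gamma> d0_ex R_ex T'))"
proof -
  define P where "P T f s = (\<Sum>t. \<gamma>^t * state_dist d0_ex T (det_policy f) t s)" for T f s
  have V: "value_fn \<gamma> d0_ex R_ex T (det_policy f) =
     (if f S0 = A0 then P T f S0 else 0) + (if f S1 = A1 then P T f S1 else 0)" for T f
    by (simp add: value_fn_def sum_pair vc_det R_ex_def P_def)
  have C: "visit_vec \<gamma> d0_ex T (det_policy f) $ (s,a) = (if a = f s then P T f s else 0)" for T f s a
    by (simp add: visit_vec_def vc_det P_def)
  have pos: "0 < P T f s" if "valid_transition T" for T f s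
    unfolding P_def using series_props[OF that assms] by blast
  have tot: "P T f S0 + P T f S1 = 1 / (1 - \<gamma>)" if "valid_transition T" for T f
    unfolding P_def using series_props[OF that assms] by blast
  let ?f0 = "\<lambda>s::st. A0" and ?f1 = "\<lambda>s. if s = S0 then A0 else A1" and ?f2 = "\<lambda>s. if s = S0 then A1 else A0"
  have part1: "\<not> collinear {visit_vec \<gamma> d0_ex T pi0, visit_vec \<gamma> d0_ex T pi1, visit_vec \<gamma> d0_ex T pi2}"
    if vt: "valid_transition T" for T
  proof
    assume "collinear {visit_vec \<gamma> d0_ex T pi0, visit_vec \<gamma> d0_ex T pi1, visit_vec \<gamma> d0_ex T pi2}"
    then obtain u where u: "\<forall>x\<in>{visit_vec \<gamma> d0_ex T pi0, visit_vec \<gamma> d0_ex T pi1, visit_vec \<gamma> d0_ex T pi2}.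
       \<forall>y\<in>{visit_vec \<gamma> d0_ex T pi0, visit_vec \<gamma> d0_ex T pi1, visit_vec \<gamma> d0_ex T pi2}. \<exists>c. x - y = c *\<^sub>R u"
      unfolding collinear_def by blast
    obtain c where c: "visit_vec \<gamma> d0_ex T pi1 - visit_vec \<gamma> d0_ex T pi0 = c *\<^sub>R u" using u by blast
    obtain c' where c': "visit_vec \<gamma> d0_ex T pi2 - visit_vec \<gamma> d0_ex T pi0 = c' *\<^sub>R u" using u by blast
    have "(visit_vec \<gamma> d0_ex T pi1 - visit_vec \<gamma> d0_ex T pi0) $ (S1,A1) = (c *\<^sub>R u) $ (S1,A1)" using c by simp
    then have e1: "P T ?f1 S1 = c * u $ (S1,A1)" by (simp add: C pi0_def pi1_def)
    have "(visit_vec \<gamma> d0_ex T pi2 - visit_vec \<gamma> d0_ex T pi0) $ (S1,A1) = (c' *\<^sub>R u) $ (S1,A1)" using c' by simp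
    then have e2: "0 = c' * u $ (S1,A1)" by (simp add: C pi0_def pi2_def)
    have "(visit_vec \<gamma> d0_ex T pi2 - visit_vec \<gamma> d0_ex T pi0) $ (S0,A1) = (c' *\<^sub>R u) $ (S0,A1)" using c' by simp
    then have e3: "P T ?f2 S0 = c' * u $ (S0,A1)" by (simp add: C pi0_def pi2_def)
    have "u $ (S1,A1) \<noteq> 0" using e1 pos[OF vt, of ?f1 S1] by auto
    then have "c' = 0" using e2 by simp
    then show False using e3 pos[OF vt, of ?f2 S0] by simp
  qed
  have part2: "1 / (1 - \<gamma>) = value_fn \<gamma> d0_ex R_ex T pi1
            \<and> value_fn \<gamma> d0_ex R_ex T pi1 > value_fn \<gamma> d0_ex R_ex T pi0
            \<and> value_fn \<gamma> d0_ex R_ex T pi0 > value_fn \<gamma> d0_ex R_ex T pi2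
            \<and> value_fn \<gamma> d0_ex R_ex T pi2 = 0" if vt: "valid_transition T" for T
  proof -
    have a: "value_fn \<gamma> d0_ex R_ex T pi1 = 1 / (1 - \<gamma>)" using tot[OF vt, of ?f1] by (simp add: pi1_def V)
    have b: "value_fn \<gamma> d0_ex R_ex T pi0 = P T ?f0 S0" by (simp add: pi0_def V)
    have d: "value_fn \<gamma> d0_ex R_ex T pi2 = 0" by (simp add: pi2_def V)
    have "P T ?f0 S0 < 1 / (1 - \<gamma>)" using tot[OF vt, of ?f0] pos[OF vt, of ?f0 S1] by linarith
    then show ?thesis using a b d pos[OF vt, of ?f0 S0] by auto
  qed
  have part3: "equivalent_on Pi_hat (value_fn \<gamma> d0_ex R_ex T) (value_fn \<gamma> d0_ex R_ex T')"
    if "valid_transition T" "valid_transition T'" for T T'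
    using part2[OF that(1)] part2[OF that(2)] unfolding equivalent_on_def Pi_hat_def
    by auto
  show ?thesis using part1 part2 part3 by blast
qed

end
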